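(* Let $R$ be a commutative Noetherian ring of prime characteristic $p$, let $b\in\mathbb{N}$, let $W=\bigoplus_{n\geq b}W_n$ be a $\mathbb{Z}$-graded left $R[x,f]$-module (with $W_n=0$ for $n<b$), let $g_1,\ldots,g_t\in W_b$, and let $K:=\{(r_1,\ldots,r_t)\in R^t:\sum_{i=1}^t r_ig_i=0\}$. Then there is a graded left $R[x,f]$-module $W'=\bigoplus_{n\geq b-1}W'_n=(R^t/f^{-1}(K))\oplus W_b\oplus W_{b+1}\oplus\cdots$ (so $W'_{b-1}=R^t/f^{-1}(K)$ and $W'_n=W_n$ for $n\ge b$) which contains $W$ as an $R[x,f]$-submodule and satisfies $x((r_1,\ldots,r_t)+f^{-1}(K))=\sum_{i=1}^t r_i^pg_i$ for all $(r_1,\ldots,r_t)\in R^t$. Moreover, if $W$ is $x$-torsion-free, then so is $W'$, and in that case $\mathcal{G}(W')=\mathcal{G}(W)$ and $\mathcal{I}(W')=\mathcal{I}(W)$.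
   Context: $R[x,f]$ denotes the Frobenius skew polynomial ring over $R$: as a left $R$-module it is free on $(x^i)_{i\in\mathbb{N}_0}$, with multiplication subject to $xr = r^px$; it is graded with $n$th component $Rx^n$. $f:R^t\to R^t$ is the Frobenius map $(r_1,\ldots,r_t)\mapsto(r_1^p,\ldots,r_t^p)$, and $f^{-1}(K)=\{v\in R^t: f(v)\in K\}$. For a left $R[x,f]$-module $M$: $M$ is $x$-torsion-free if $xm=0$ implies $m=0$; $\operatorname{grann}_{R[x,f]}M$ is the largest graded two-sided ideal annihilating $M$; $\mathcal{G}(M)$ is the set of graded annihilators of $R[x,f]$-submodules of $M$; when $M$ is $x$-torsion-free each such graded annihilator has the form $\mathfrak{c}R[x,f]=\bigoplus_n\mathfrak{c}x^n$ for an ideal $\mathfrak{c}$ of $R$, and $\mathcal{I}(M)$ is the set of ideals $\mathfrak{c}$ of $R$ with $\mathfrak{c}R[x,f]=\operatorname{grann}_{R[x,f]}N$ for some $R[x,f]$-submodule $N$ of $M$. *)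

theory Defs
  imports "HOL-Algebra.Module" "HOL-Algebra.Ring_Divisibility"
begin

(* A natural prime number (written out; HOL-Algebra's "prime" is the monoid notion). *)
definition nat_prime :: "nat \<Rightarrow> bool" where
  "nat_prime p \<longleftrightarrow> p \<ge> 2 \<and> (\<forall>d. d dvd p \<longrightarrow> d = 1 \<or> d = p)"

definition ring_char_eq :: "('a, 'c) ring_scheme \<Rightarrow> nat \<Rightarrow> bool" where
  "ring_char_eq R p \<longleftrightarrow> 0 < p \<and> add_pow R p \<one>\<^bsub>R\<^esub> = \<zero>\<^bsub>R\<^esub>
      \<and> (\<forall>n. 0 < n \<and> n < p \<longrightarrow> add_pow R n \<one>\<^bsub>R\<^esub> \<noteq> \<zero>\<^bsub>R\<^esub>)"

(* A left R[x,f]-module, where R[x,f] is the Frobenius skew polynomial ring (x r = r^p x):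
   an R-module M together with the action \<phi> of x, i.e. an additive map with
   \<phi>(r m) = r^p \<phi>(m).  (r x^n acts as m \<mapsto> r \<odot> \<phi>^n m.) *)
definition frob_module :: "('a, 'c) ring_scheme \<Rightarrow> nat \<Rightarrow> ('a, 'm) module \<Rightarrow> ('m \<Rightarrow> 'm) \<Rightarrow> bool" where
  "frob_module R p M \<phi> \<longleftrightarrow> module R M \<and> \<phi> \<in> carrier M \<rightarrow> carrier M
     \<and> (\<forall>m \<in> carrier M. \<forall>n \<in> carrier M. \<phi> (m \<oplus>\<^bsub>M\<^esub> n) = \<phi> m \<oplus>\<^bsub>M\<^esub> \<phi> n)
     \<and> (\<forall>r \<in> carrier R. \<forall>m \<in> carrier M. \<phi> (r \<odot>\<^bsub>M\<^esub> m) = (r [^]\<^bsub>R\<^esub> p) \<odot>\<^bsub>M\<^esub> \<phi> m)"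

definition graded_frob_module ::
  "('a, 'c) ring_scheme \<Rightarrow> nat \<Rightarrow> ('a, 'm) module \<Rightarrow> ('m \<Rightarrow> 'm) \<Rightarrow> (int \<Rightarrow> 'm set) \<Rightarrow> bool" where
  "graded_frob_module R p M \<phi> D \<longleftrightarrow> frob_module R p M \<phi>
     \<and> (\<forall>n. submodule (D n) R M)
     \<and> (\<forall>n. \<phi> ` D n \<subseteq> D (n + 1))
     \<and> (\<forall>m \<in> carrier M. \<exists>!c :: int \<Rightarrow> 'm. (\<forall>n. c n \<in> D n) \<and> finite {n. c n \<noteq> \<zero>\<^bsub>M\<^esub>}
            \<and> m = finsum M c {n. c n \<noteq> \<zero>\<^bsub>M\<^esub>})"

definition frob_submodule :: "('a, 'c) ring_scheme \<Rightarrow> ('a, 'm) module \<Rightarrow> ('m \<Rightarrow> 'm) \<Rightarrow> 'm set \<Rightarrow> bool" where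
  "frob_submodule R M \<phi> N \<longleftrightarrow> submodule N R M \<and> \<phi> ` N \<subseteq> N"

definition x_torsion_free :: "('a, 'm) module \<Rightarrow> ('m \<Rightarrow> 'm) \<Rightarrow> bool" where
  "x_torsion_free M \<phi> \<longleftrightarrow> (\<forall>m \<in> carrier M. \<phi> m = \<zero>\<^bsub>M\<^esub> \<longrightarrow> m = \<zero>\<^bsub>M\<^esub>)"

(* A graded two-sided ideal \<Oplus>_n I_n x^n of R[x,f], given by its components I_n \<subseteq> R:
   each I_n is an ideal of R (closure under left/right multiplication by elements of R),
   closure under left multiplication by x (r \<in> I_n \<Longrightarrow> r^p \<in> I_{n+1}) and under right
   multiplication by x (I_n \<subseteq> I_{n+1}). *)
definition graded_two_sided_ideal :: "('a, 'c) ring_scheme \<Rightarrow> nat \<Rightarrow> (nat \<Rightarrow> 'a set) \<Rightarrow> bool" where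
  "graded_two_sided_ideal R p I \<longleftrightarrow> (\<forall>n. ideal (I n) R)
     \<and> (\<forall>n. \<forall>r \<in> I n. r [^]\<^bsub>R\<^esub> p \<in> I (Suc n))
     \<and> (\<forall>n. I n \<subseteq> I (Suc n))"

definition annihilates :: "('a, 'm) module \<Rightarrow> ('m \<Rightarrow> 'm) \<Rightarrow> (nat \<Rightarrow> 'a set) \<Rightarrow> 'm set \<Rightarrow> bool" where
  "annihilates M \<phi> I N \<longleftrightarrow> (\<forall>n. \<forall>r \<in> I n. \<forall>m \<in> N. r \<odot>\<^bsub>M\<^esub> (\<phi> ^^ n) m = \<zero>\<^bsub>M\<^esub>)"

definition grann :: "('a, 'c) ring_scheme \<Rightarrow> nat \<Rightarrow> ('a, 'm) module \<Rightarrow> ('m \<Rightarrow> 'm) \<Rightarrow> 'm set \<Rightarrow> nat \<Rightarrow> 'a set" where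
  "grann R p M \<phi> N = (THE I. graded_two_sided_ideal R p I \<and> annihilates M \<phi> I N
      \<and> (\<forall>J. graded_two_sided_ideal R p J \<and> annihilates M \<phi> J N \<longrightarrow> (\<forall>n. J n \<subseteq> I n)))"

definition grann_set :: "('a, 'c) ring_scheme \<Rightarrow> nat \<Rightarrow> ('a, 'm) module \<Rightarrow> ('m \<Rightarrow> 'm) \<Rightarrow> (nat \<Rightarrow> 'a set) set" where
  "grann_set R p M \<phi> = {grann R p M \<phi> N | N. frob_submodule R M \<phi> N}"

(* \<I>(M): ideals c of R with c R[x,f] = grann N for some R[x,f]-submodule N *)
definition grann_ideals :: "('a, 'c) ring_scheme \<Rightarrow> nat \<Rightarrow> ('a, 'm) module \<Rightarrow> ('m \<Rightarrow> 'm) \<Rightarrow> 'a set set" where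
  "grann_ideals R p M \<phi> = {c. ideal c R \<and> (\<exists>N. frob_submodule R M \<phi> N \<and> grann R p M \<phi> N = (\<lambda>n. c))}"

(* R^t, represented by functions nat \<Rightarrow> 'a vanishing outside {0..<t} *)
definition vecs :: "('a, 'c) ring_scheme \<Rightarrow> nat \<Rightarrow> (nat \<Rightarrow> 'a) set" where
  "vecs R t = {r. (\<forall>i < t. r i \<in> carrier R) \<and> (\<forall>i \<ge> t. r i = \<zero>\<^bsub>R\<^esub>)}"

definition relations :: "('a, 'c) ring_scheme \<Rightarrow> ('a, 'm) module \<Rightarrow> nat \<Rightarrow> (nat \<Rightarrow> 'm) \<Rightarrow> (nat \<Rightarrow> 'a) set" where
  "relations R M t g = {r \<in> vecs R t. (\<Oplus>\<^bsub>M\<^esub> i \<in> {..<t}. r i \<odot>\<^bsub>M\<^esub> g i) = \<zero>\<^bsub>M\<^esub>}"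

definition frob_preimage :: "('a, 'c) ring_scheme \<Rightarrow> nat \<Rightarrow> nat \<Rightarrow> (nat \<Rightarrow> 'a) set \<Rightarrow> (nat \<Rightarrow> 'a) set" where
  "frob_preimage R p t K = {r \<in> vecs R t. (\<lambda>i. r i [^]\<^bsub>R\<^esub> p) \<in> K}"

definition frob_mono :: "('a, 'c) ring_scheme \<Rightarrow> ('a, 'm) module \<Rightarrow> ('m \<Rightarrow> 'm) \<Rightarrow>
    ('a, 'n) module \<Rightarrow> ('n \<Rightarrow> 'n) \<Rightarrow> ('m \<Rightarrow> 'n) \<Rightarrow> bool" where
  "frob_mono R M \<phi> M' \<phi>' \<iota> \<longleftrightarrow> \<iota> \<in> carrier M \<rightarrow> carrier M' \<and> inj_on \<iota> (carrier M)
     \<and> (\<forall>m \<in> carrier M. \<forall>n \<in> carrier M. \<iota> (m \<oplus>\<^bsub>M\<^esub> n) = \<iota> m \<oplus>\<^bsub>M'\<^esub> \<iota> n)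
     \<and> (\<forall>r \<in> carrier R. \<forall>m \<in> carrier M. \<iota> (r \<odot>\<^bsub>M\<^esub> m) = r \<odot>\<^bsub>M'\<^esub> \<iota> m)
     \<and> (\<forall>m \<in> carrier M. \<iota> (\<phi> m) = \<phi>' (\<iota> m))"

end

theory Submission
  imports Defs "HOL-Computational_Algebra.Primes"
begin


lemma (in cring) binomial_thm:
  assumes a: "a \<in> carrier R" and b: "b \<in> carrier R"
  shows "(a \<oplus> b) [^] n = (\<Oplus>k\<in>{..n}. [(n choose k)] \<cdot> (a [^] k \<otimes> b [^] (n - k)))"
proof (induction n)
  case 0
  then show ?case using a b by simp
next
  case (Suc n)
  define G where "G k = a [^] k \<otimes> b [^] (Suc n - k)" for k
  have G: "G k \<in> carrier R" for k using a b by (simp add: G_def)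
  have GS: "G (Suc k) = a [^] k \<otimes> b [^] (n - k) \<otimes> a" if "k \<le> n" for k
    using a b that by (simp add: G_def m_ac)
  have G0: "G k = a [^] k \<otimes> b [^] (n - k) \<otimes> b" if "k \<le> n" for k
  proof -
    have "Suc n - k = Suc (n - k)" using that by simp
    then show ?thesis using a b by (simp add: G_def m_ac)
  qed
  have "(a \<oplus> b) [^] Suc n = (a \<oplus> b) [^] n \<otimes> a \<oplus> (a \<oplus> b) [^] n \<otimes> b"
    using a b by (simp add: r_distr)
  also have "(a \<oplus> b) [^] n \<otimes> a = (\<Oplus>k\<in>{..n}. [(n choose k)] \<cdot> G (Suc k))"
    unfolding Suc.IH
    apply (subst finsum_ldistr)
    using a b apply auto
    apply (rule finsum_cong')
    using a b by (auto simp: GS add_pow_ldistr)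
  also have "(a \<oplus> b) [^] n \<otimes> b = (\<Oplus>k\<in>{..n}. [(n choose k)] \<cdot> G k)"
    unfolding Suc.IH
    apply (subst finsum_ldistr)
    using a b apply auto
    apply (rule finsum_cong')
    using a b by (auto simp: G0 add_pow_ldistr)
  also have "(\<Oplus>k\<in>{..n}. [(n choose k)] \<cdot> G k) = (\<Oplus>k\<in>{..Suc n}. [(n choose k)] \<cdot> G k)"
    using G by (simp add: finsum_Suc binomial_eq_0)
  also have "(\<Oplus>k\<in>{..n}. [(n choose k)] \<cdot> G (Suc k)) = 
     (\<Oplus>k\<in>{..Suc n}. [(if k = 0 then 0 else n choose (k - 1))] \<cdot> G k)"
    using G finsum_Suc2[of "\<lambda>k. [(if k = 0 then 0 else n choose (k - 1))] \<cdot> G k" n] by simp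
  also have "(\<Oplus>k\<in>{..Suc n}. [(if k = 0 then 0 else n choose (k - 1))] \<cdot> G k) \<oplus> (\<Oplus>k\<in>{..Suc n}. [(n choose k)] \<cdot> G k)
     = (\<Oplus>k\<in>{..Suc n}. [(if k = 0 then 0 else n choose (k - 1))] \<cdot> G k \<oplus> [(n choose k)] \<cdot> G k)"
    using G by (simp add: finsum_addf)
  also have "\<dots> = (\<Oplus>k\<in>{..Suc n}. [(Suc n choose k)] \<cdot> (a [^] k \<otimes> b [^] (Suc n - k)))"
  proof (rule finsum_cong')
    fix k assume "k \<in> {..Suc n}"
    show "[(if k = 0 then 0 else n choose (k - 1))] \<cdot> G k \<oplus> [(n choose k)] \<cdot> G k =
         [(Suc n choose k)] \<cdot> (a [^] k \<otimes> b [^] (Suc n - k))"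
    proof (cases k)
      case 0 then show ?thesis using G a b by (simp add: G_def)
    next
      case (Suc j)
      then show ?thesis using G a b add.nat_pow_mult[of "a [^] j \<otimes> a \<otimes> b [^] (n - j)" "n choose j" "n choose Suc j"]
        by (simp add: G_def add.commute)
    qed
  qed (use a b in auto)
  finally show ?case .
qed

lemma (in cring) freshman:
  assumes a: "a \<in> carrier R" and b: "b \<in> carrier R"
    and p: "prime (p::nat)" and c: "[p] \<cdot> \<one> = \<zero>"
  shows "(a \<oplus> b) [^] p = a [^] p \<oplus> b [^] p"
proof -
  have p0: "p \<noteq> 0" using p by auto
  have mid: "[(p choose k)] \<cdot> x = \<zero>" if "0 < k" "k < p" "x \<in> carrier R" for k x
  proof -
    have "p dvd (p choose k)" by (rule dvd_choose_prime) (use that p0 p in auto)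
    then obtain m where m: "p choose k = p * m" by (auto elim: dvdE)
    have "[p] \<cdot> x = \<zero>" using that c add_pow_ldistr[of \<one> x p] by simp
    then show ?thesis using m that add.nat_pow_pow[of x p m] add.nat_pow_pow[of x m p]
      by (metis add.nat_pow_one mult.commute)
  qed
  have "(a \<oplus> b) [^] p = (\<Oplus>k\<in>{..p}. (if k = p then a [^] p else \<zero>) \<oplus> (if k = 0 then b [^] p else \<zero>))"
    unfolding binomial_thm[OF a b]
  proof (rule finsum_cong')
    fix k assume k: "k \<in> {..p}"
    show "[(p choose k)] \<cdot> (a [^] k \<otimes> b [^] (p - k)) = (if k = p then a [^] p else \<zero>) \<oplus> (if k = 0 then b [^] p else \<zero>)"
      using k p0 a b mid[of k "a [^] k \<otimes> b [^] (p - k)"] by auto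
  qed (use a b in auto)
  also have "\<dots> = a [^] p \<oplus> b [^] p"
    using a b add.finprod_singleton_swap[of p "{..p}" "\<lambda>k. a [^] p"]
      add.finprod_singleton_swap[of 0 "{..p}" "\<lambda>k. b [^] p"]
    by (simp add: finsum_addf)
  finally show ?thesis .
qed



locale frobset = module R W
  for R :: "('a,'c) ring_scheme" and W :: "('a,'m) module" +
  fixes p t :: nat and b :: int and \<phi> :: "'m \<Rightarrow> 'm" and D :: "int \<Rightarrow> 'm set" and g :: "nat \<Rightarrow> 'm"
  assumes prime: "nat_prime p" and char: "ring_char_eq R p"
    and grad: "graded_frob_module R p W \<phi> D"
    and low: "\<forall>n<b. D n = {\<zero>\<^bsub>W\<^esub>}"
    and gb: "\<forall>i<t. g i \<in> D b"
begin

lemma p_prime: "prime p"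
  using prime unfolding nat_prime_def prime_nat_iff by auto

lemma p_pos: "0 < p" using p_prime prime_gt_0_nat by blast

lemma frob_add: "a \<in> carrier R \<Longrightarrow> c \<in> carrier R \<Longrightarrow> (a \<oplus>\<^bsub>R\<^esub> c) [^]\<^bsub>R\<^esub> p = a [^]\<^bsub>R\<^esub> p \<oplus>\<^bsub>R\<^esub> c [^]\<^bsub>R\<^esub> p"
  using R.freshman[OF _ _ p_prime] char unfolding ring_char_eq_def by blast

lemma frob_mult: "a \<in> carrier R \<Longrightarrow> c \<in> carrier R \<Longrightarrow> (a \<otimes>\<^bsub>R\<^esub> c) [^]\<^bsub>R\<^esub> p = a [^]\<^bsub>R\<^esub> p \<otimes>\<^bsub>R\<^esub> c [^]\<^bsub>R\<^esub> p"
  by (rule R.nat_pow_distrib)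

lemma frob_zero: "\<zero>\<^bsub>R\<^esub> [^]\<^bsub>R\<^esub> p = \<zero>\<^bsub>R\<^esub>"
  using p_pos by (simp add: R.nat_pow_zero)

lemma fm: "frob_module R p W \<phi>" using grad unfolding graded_frob_module_def by auto

lemma phi_closed: "m \<in> carrier W \<Longrightarrow> \<phi> m \<in> carrier W"
  using fm unfolding frob_module_def by auto

lemma phi_add: "m \<in> carrier W \<Longrightarrow> n \<in> carrier W \<Longrightarrow> \<phi> (m \<oplus>\<^bsub>W\<^esub> n) = \<phi> m \<oplus>\<^bsub>W\<^esub> \<phi> n"
  using fm unfolding frob_module_def by auto

lemma phi_smult: "r \<in> carrier R \<Longrightarrow> m \<in> carrier W \<Longrightarrow> \<phi> (r \<odot>\<^bsub>W\<^esub> m) = (r [^]\<^bsub>R\<^esub> p) \<odot>\<^bsub>W\<^esub> \<phi> m"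
  using fm unfolding frob_module_def by auto

lemma phi_zero: "\<phi> \<zero>\<^bsub>W\<^esub> = \<zero>\<^bsub>W\<^esub>"
proof -
  have "\<phi> \<zero>\<^bsub>W\<^esub> = \<phi> \<zero>\<^bsub>W\<^esub> \<oplus>\<^bsub>W\<^esub> \<phi> \<zero>\<^bsub>W\<^esub>"
    using phi_add[of "\<zero>\<^bsub>W\<^esub>" "\<zero>\<^bsub>W\<^esub>"] by simp
  then show ?thesis using phi_closed[of "\<zero>\<^bsub>W\<^esub>"] by (metis M.l_zero M.zero_closed M.add.right_cancel)
qed

lemma D_sub: "submodule (D n) R W" using grad unfolding graded_frob_module_def by auto

lemma D_carrier: "D n \<subseteq> carrier W" using submoduleE(1)[OF D_sub] .

lemma D_zero: "\<zero>\<^bsub>W\<^esub> \<in> D n"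
  using D_sub[of n] unfolding submodule_def subgroup_def by auto

lemma D_add: "x \<in> D n \<Longrightarrow> y \<in> D n \<Longrightarrow> x \<oplus>\<^bsub>W\<^esub> y \<in> D n"
  using submoduleE(5)[OF D_sub] by blast

lemma D_smult: "a \<in> carrier R \<Longrightarrow> x \<in> D n \<Longrightarrow> a \<odot>\<^bsub>W\<^esub> x \<in> D n"
  using submoduleE(4)[OF D_sub] by blast

lemma D_neg: "x \<in> D n \<Longrightarrow> \<ominus>\<^bsub>W\<^esub> x \<in> D n"
  using submoduleE(3)[OF D_sub] by blast

lemma D_phi: "x \<in> D n \<Longrightarrow> \<phi> x \<in> D (n + 1)"
  using grad unfolding graded_frob_module_def by auto

lemma D_finsum: "finite A \<Longrightarrow> f \<in> A \<rightarrow> D n \<Longrightarrow> finsum W f A \<in> D n"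
proof (induction A rule: finite_induct)
  case empty then show ?case by (simp add: D_zero)
next
  case (insert x A)
  then have "f \<in> A \<rightarrow> carrier W" "f x \<in> carrier W" using D_carrier by auto
  then show ?case using insert by (simp add: D_add)
qed

lemma g_carrier: "i < t \<Longrightarrow> g i \<in> carrier W" using gb D_carrier by auto

definition F :: "(nat \<Rightarrow> 'a) \<Rightarrow> 'm" where
  "F r = (\<Oplus>\<^bsub>W\<^esub> i\<in>{..<t}. (r i [^]\<^bsub>R\<^esub> p) \<odot>\<^bsub>W\<^esub> g i)"

abbreviation "V \<equiv> vecs R t"

lemma V_iff: "r \<in> V \<longleftrightarrow> (\<forall>i<t. r i \<in> carrier R) \<and> (\<forall>i\<ge>t. r i = \<zero>\<^bsub>R\<^esub>)"
  unfolding vecs_def by auto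

lemma F_Db: "r \<in> V \<Longrightarrow> F r \<in> D b"
  unfolding F_def by (rule D_finsum) (auto simp: V_iff gb D_smult)

lemma F_carrier: "r \<in> V \<Longrightarrow> F r \<in> carrier W"
  using F_Db D_carrier by auto

lemma F_add: "r \<in> V \<Longrightarrow> s \<in> V \<Longrightarrow> F (\<lambda>i. r i \<oplus>\<^bsub>R\<^esub> s i) = F r \<oplus>\<^bsub>W\<^esub> F s"
proof -
  assume r: "r \<in> V" and s: "s \<in> V"
  have "F (\<lambda>i. r i \<oplus>\<^bsub>R\<^esub> s i) = (\<Oplus>\<^bsub>W\<^esub> i\<in>{..<t}. (r i [^]\<^bsub>R\<^esub> p) \<odot>\<^bsub>W\<^esub> g i \<oplus>\<^bsub>W\<^esub> (s i [^]\<^bsub>R\<^esub> p) \<odot>\<^bsub>W\<^esub> g i)"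
    unfolding F_def
    by (rule M.finsum_cong') (use r s in \<open>auto simp: V_iff frob_add smult_l_distr g_carrier\<close>)
  also have "\<dots> = F r \<oplus>\<^bsub>W\<^esub> F s"
    unfolding F_def by (rule M.finsum_addf) (use r s in \<open>auto simp: V_iff g_carrier\<close>)
  finally show ?thesis .
qed

lemma F_smult: "a \<in> carrier R \<Longrightarrow> r \<in> V \<Longrightarrow> F (\<lambda>i. a \<otimes>\<^bsub>R\<^esub> r i) = (a [^]\<^bsub>R\<^esub> p) \<odot>\<^bsub>W\<^esub> F r"
proof -
  assume a: "a \<in> carrier R" and r: "r \<in> V"
  have "F (\<lambda>i. a \<otimes>\<^bsub>R\<^esub> r i) = (\<Oplus>\<^bsub>W\<^esub> i\<in>{..<t}. (a [^]\<^bsub>R\<^esub> p) \<odot>\<^bsub>W\<^esub> ((r i [^]\<^bsub>R\<^esub> p) \<odot>\<^bsub>W\<^esub> g i))"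
    unfolding F_def
    by (rule M.finsum_cong') (use a r in \<open>auto simp: V_iff frob_mult smult_assoc1 g_carrier\<close>)
  also have "\<dots> = (a [^]\<^bsub>R\<^esub> p) \<odot>\<^bsub>W\<^esub> F r"
    unfolding F_def by (rule finsum_smult_ldistr[symmetric]) (use a r in \<open>auto simp: V_iff g_carrier\<close>)
  finally show ?thesis .
qed

lemma zero_V: "(\<lambda>i. \<zero>\<^bsub>R\<^esub>) \<in> V" by (simp add: V_iff)

lemma add_V: "r \<in> V \<Longrightarrow> s \<in> V \<Longrightarrow> (\<lambda>i. r i \<oplus>\<^bsub>R\<^esub> s i) \<in> V" by (simp add: V_iff)

lemma smult_V: "a \<in> carrier R \<Longrightarrow> r \<in> V \<Longrightarrow> (\<lambda>i. a \<otimes>\<^bsub>R\<^esub> r i) \<in> V" by (simp add: V_iff)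

lemma F_zero: "F (\<lambda>i. \<zero>\<^bsub>R\<^esub>) = \<zero>\<^bsub>W\<^esub>"
  using F_smult[OF R.zero_closed zero_V] F_carrier[OF zero_V] frob_zero by simp

abbreviation "U \<equiv> F ` V"

lemma U_carrier: "u \<in> U \<Longrightarrow> u \<in> carrier W" using F_carrier by auto
lemma U_Db: "u \<in> U \<Longrightarrow> u \<in> D b" using F_Db by auto
lemma U_zero: "\<zero>\<^bsub>W\<^esub> \<in> U" using F_zero zero_V by force
lemma U_add: "u \<in> U \<Longrightarrow> v \<in> U \<Longrightarrow> u \<oplus>\<^bsub>W\<^esub> v \<in> U"
proof -
  assume "u \<in> U" "v \<in> U"
  then obtain r s where "r \<in> V" "s \<in> V" "u = F r" "v = F s" by auto
  then show ?thesis using F_add add_V by (intro image_eqI[of _ _ "\<lambda>i. r i \<oplus>\<^bsub>R\<^esub> s i"]) auto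
qed
lemma U_smult: "a \<in> carrier R \<Longrightarrow> u \<in> U \<Longrightarrow> (a [^]\<^bsub>R\<^esub> p) \<odot>\<^bsub>W\<^esub> u \<in> U"
proof -
  assume a: "a \<in> carrier R" and "u \<in> U"
  then obtain r where "r \<in> V" "u = F r" by auto
  then show ?thesis using F_smult smult_V a by (intro image_eqI[of _ _ "\<lambda>i. a \<otimes>\<^bsub>R\<^esub> r i"]) auto
qed
lemma U_neg: "u \<in> U \<Longrightarrow> \<ominus>\<^bsub>W\<^esub> u \<in> U"
proof -
  assume "u \<in> U"
  then obtain r where r: "r \<in> V" "u = F r" by auto
  have "(\<ominus>\<^bsub>R\<^esub> \<one>\<^bsub>R\<^esub>) [^]\<^bsub>R\<^esub> p \<odot>\<^bsub>W\<^esub> u \<oplus>\<^bsub>W\<^esub> u = \<zero>\<^bsub>W\<^esub>"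
  proof -
    have "(\<ominus>\<^bsub>R\<^esub> \<one>\<^bsub>R\<^esub>) [^]\<^bsub>R\<^esub> p \<odot>\<^bsub>W\<^esub> u \<oplus>\<^bsub>W\<^esub> u = 
       ((\<ominus>\<^bsub>R\<^esub> \<one>\<^bsub>R\<^esub>) [^]\<^bsub>R\<^esub> p \<oplus>\<^bsub>R\<^esub> \<one>\<^bsub>R\<^esub> [^]\<^bsub>R\<^esub> p) \<odot>\<^bsub>W\<^esub> u"
      using r F_carrier by (simp add: smult_l_distr)
    also have "\<dots> = (\<ominus>\<^bsub>R\<^esub> \<one>\<^bsub>R\<^esub> \<oplus>\<^bsub>R\<^esub> \<one>\<^bsub>R\<^esub>) [^]\<^bsub>R\<^esub> p \<odot>\<^bsub>W\<^esub> u"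
      by (simp add: frob_add)
    also have "\<dots> = \<zero>\<^bsub>W\<^esub>" using r F_carrier frob_zero by (simp add: R.l_neg)
    finally show ?thesis .
  qed
  then have "\<ominus>\<^bsub>W\<^esub> u = (\<ominus>\<^bsub>R\<^esub> \<one>\<^bsub>R\<^esub>) [^]\<^bsub>R\<^esub> p \<odot>\<^bsub>W\<^esub> u"
    using r F_carrier by (metis M.add.inv_closed M.minus_equality M.r_neg R.add.inv_closed R.nat_pow_closed R.one_closed smult_closed)
  then show ?thesis using U_smult[of "\<ominus>\<^bsub>R\<^esub> \<one>\<^bsub>R\<^esub>" u] \<open>u \<in> U\<close> by simp
qed

end


context frobset begin

definition cls :: "'m \<Rightarrow> (nat \<Rightarrow> 'a) set" where "cls u = {s \<in> V. F s = u}"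
definition val :: "(nat \<Rightarrow> 'a) set \<Rightarrow> 'm" where "val A = F (SOME s. s \<in> A)"

lemma val_cls [simp]: "u \<in> U \<Longrightarrow> val (cls u) = u"
proof -
  assume "u \<in> U"
  then obtain r where r: "r \<in> V" "F r = u" by auto
  then have "r \<in> cls u" unfolding cls_def by auto
  then have "(SOME s. s \<in> cls u) \<in> cls u" by (rule someI[where P="\<lambda>s. s \<in> cls u"])
  then show ?thesis unfolding val_def cls_def by auto
qed

lemma cls_inj [simp]: "u \<in> U \<Longrightarrow> v \<in> U \<Longrightarrow> cls u = cls v \<longleftrightarrow> u = v"
  by (metis val_cls)

definition W' :: "('a, (nat \<Rightarrow> 'a) set \<times> 'm) module" where
 "W' = \<lparr>carrier = {(cls u, w) | u w. u \<in> U \<and> w \<in> carrier W},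
        mult = (\<lambda>X Y. X), one = (cls \<zero>\<^bsub>W\<^esub>, \<zero>\<^bsub>W\<^esub>), zero = (cls \<zero>\<^bsub>W\<^esub>, \<zero>\<^bsub>W\<^esub>),
        add = (\<lambda>X Y. (cls (val (fst X) \<oplus>\<^bsub>W\<^esub> val (fst Y)), snd X \<oplus>\<^bsub>W\<^esub> snd Y)),
        smult = (\<lambda>a X. (cls ((a [^]\<^bsub>R\<^esub> p) \<odot>\<^bsub>W\<^esub> val (fst X)), a \<odot>\<^bsub>W\<^esub> snd X))\<rparr>"

lemma W'_carrier: "carrier W' = {(cls u, w) | u w. u \<in> U \<and> w \<in> carrier W}"
  by (simp add: W'_def)
lemma W'_zero: "\<zero>\<^bsub>W'\<^esub> = (cls \<zero>\<^bsub>W\<^esub>, \<zero>\<^bsub>W\<^esub>)"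
  by (simp add: W'_def)
lemma W'_add [simp]: "u \<in> U \<Longrightarrow> v \<in> U \<Longrightarrow> (cls u, w) \<oplus>\<^bsub>W'\<^esub> (cls v, z) = (cls (u \<oplus>\<^bsub>W\<^esub> v), w \<oplus>\<^bsub>W\<^esub> z)"
  by (simp add: W'_def)
lemma W'_smult [simp]: "u \<in> U \<Longrightarrow> a \<odot>\<^bsub>W'\<^esub> (cls u, w) = (cls ((a [^]\<^bsub>R\<^esub> p) \<odot>\<^bsub>W\<^esub> u), a \<odot>\<^bsub>W\<^esub> w)"
  by (simp add: W'_def)
lemma W'_mem [simp]: "u \<in> U \<Longrightarrow> (cls u, w) \<in> carrier W' \<longleftrightarrow> w \<in> carrier W"
  by (auto simp: W'_carrier)
lemma W'_E: "X \<in> carrier W' \<Longrightarrow> (\<And>u w. X = (cls u, w) \<Longrightarrow> u \<in> U \<Longrightarrow> w \<in> carrier W \<Longrightarrow> P) \<Longrightarrow> P"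
  by (auto simp: W'_carrier)

lemmas Usimps [simp] = U_zero U_add U_smult U_neg U_carrier

lemma W'_abelian: "abelian_group W'"
proof (rule abelian_groupI)
  fix X Y Z assume X: "X \<in> carrier W'" and Y: "Y \<in> carrier W'" and Z: "Z \<in> carrier W'"
  from X obtain u w where x: "X = (cls u, w)" "u \<in> U" "w \<in> carrier W" by (rule W'_E)
  from Y obtain v z where y: "Y = (cls v, z)" "v \<in> U" "z \<in> carrier W" by (rule W'_E)
  from Z obtain v' z' where zz: "Z = (cls v', z')" "v' \<in> U" "z' \<in> carrier W" by (rule W'_E)
  show "X \<oplus>\<^bsub>W'\<^esub> Y \<in> carrier W'" using x y by simp
  show "X \<oplus>\<^bsub>W'\<^esub> Y \<oplus>\<^bsub>W'\<^esub> Z = X \<oplus>\<^bsub>W'\<^esub> (Y \<oplus>\<^bsub>W'\<^esub> Z)" using x y zz by (simp add: M.a_assoc)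
  show "X \<oplus>\<^bsub>W'\<^esub> Y = Y \<oplus>\<^bsub>W'\<^esub> X" using x y by (simp add: M.a_comm)
next
  show "\<zero>\<^bsub>W'\<^esub> \<in> carrier W'" by (simp add: W'_zero)
next
  fix X assume X: "X \<in> carrier W'"
  from X obtain u w where x: "X = (cls u, w)" "u \<in> U" "w \<in> carrier W" by (rule W'_E)
  show "\<zero>\<^bsub>W'\<^esub> \<oplus>\<^bsub>W'\<^esub> X = X" using x by (simp add: W'_zero)
  show "\<exists>Y\<in>carrier W'. Y \<oplus>\<^bsub>W'\<^esub> X = \<zero>\<^bsub>W'\<^esub>"
    using x by (intro bexI[of _ "(cls (\<ominus>\<^bsub>W\<^esub> u), \<ominus>\<^bsub>W\<^esub> w)"]) (auto simp: W'_zero M.l_neg)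
qed

lemma W'_module: "module R W'"
proof (rule moduleI)
  show "cring R" by (rule R.is_cring)
  show "abelian_group W'" by (rule W'_abelian)
next
  fix a c X Y assume a: "a \<in> carrier R" and c: "c \<in> carrier R" and X: "X \<in> carrier W'" and Y: "Y \<in> carrier W'"
  from X obtain u w where x: "X = (cls u, w)" "u \<in> U" "w \<in> carrier W" by (rule W'_E)
  from Y obtain v z where y: "Y = (cls v, z)" "v \<in> U" "z \<in> carrier W" by (rule W'_E)
  show "a \<odot>\<^bsub>W'\<^esub> X \<in> carrier W'" using x a by simp
  show "(a \<oplus>\<^bsub>R\<^esub> c) \<odot>\<^bsub>W'\<^esub> X = a \<odot>\<^bsub>W'\<^esub> X \<oplus>\<^bsub>W'\<^esub> c \<odot>\<^bsub>W'\<^esub> X"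
    using x a c by (simp add: frob_add smult_l_distr)
  show "a \<odot>\<^bsub>W'\<^esub> (X \<oplus>\<^bsub>W'\<^esub> Y) = a \<odot>\<^bsub>W'\<^esub> X \<oplus>\<^bsub>W'\<^esub> a \<odot>\<^bsub>W'\<^esub> Y"
    using x y a by (simp add: smult_r_distr)
  show "(a \<otimes>\<^bsub>R\<^esub> c) \<odot>\<^bsub>W'\<^esub> X = a \<odot>\<^bsub>W'\<^esub> (c \<odot>\<^bsub>W'\<^esub> X)"
    using x a c by (simp add: frob_mult smult_assoc1)
next
  fix X assume X: "X \<in> carrier W'"
  from X obtain u w where x: "X = (cls u, w)" "u \<in> U" "w \<in> carrier W" by (rule W'_E)
  show "\<one>\<^bsub>R\<^esub> \<odot>\<^bsub>W'\<^esub> X = X" using x by simp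
qed

end


lemma (in abelian_monoid) finsum_supp:
  assumes S: "finite S" and sub: "{n. f n \<noteq> \<zero>} \<subseteq> S"
    and f: "f \<in> S \<rightarrow> carrier G"
  shows "finsum G f {n. f n \<noteq> \<zero>} = finsum G f S"
  by (rule add.finprod_mono_neutral_cong_left[OF S sub]) (use f in auto)

context frobset begin

lemma finsum_supp_W: "finite S \<Longrightarrow> {n. f n \<noteq> \<zero>\<^bsub>W\<^esub>} \<subseteq> S \<Longrightarrow> f \<in> S \<rightarrow> carrier W \<Longrightarrow>
   finsum W f {n. f n \<noteq> \<zero>\<^bsub>W\<^esub>} = finsum W f S"
  by (rule M.finsum_supp)

lemma decomp_ex1: "m \<in> carrier W \<Longrightarrow> \<exists>!c :: int \<Rightarrow> 'm. (\<forall>n. c n \<in> D n) \<and> finite {n. c n \<noteq> \<zero>\<^bsub>W\<^esub>}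
            \<and> m = finsum W c {n. c n \<noteq> \<zero>\<^bsub>W\<^esub>}"
  using grad unfolding graded_frob_module_def by blast

lemma decomp_unique:
  assumes c1: "\<forall>n. c1 n \<in> D n" and c2: "\<forall>n. c2 n \<in> D n"
    and S1: "finite S1" "{n. c1 n \<noteq> \<zero>\<^bsub>W\<^esub>} \<subseteq> S1"
    and S2: "finite S2" "{n. c2 n \<noteq> \<zero>\<^bsub>W\<^esub>} \<subseteq> S2"
    and eq: "finsum W c1 S1 = finsum W c2 S2"
  shows "c1 = c2"
proof -
  have c1c: "c1 \<in> S1 \<rightarrow> carrier W" "c2 \<in> S2 \<rightarrow> carrier W" using c1 c2 D_carrier by blast+
  define m where "m = finsum W c1 S1"
  have m: "m \<in> carrier W" unfolding m_def using c1c by simp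
  have e1: "m = finsum W c1 {n. c1 n \<noteq> \<zero>\<^bsub>W\<^esub>}" unfolding m_def using finsum_supp_W[OF S1 c1c(1)] by simp
  have e2: "m = finsum W c2 {n. c2 n \<noteq> \<zero>\<^bsub>W\<^esub>}" unfolding m_def eq using finsum_supp_W[OF S2 c1c(2)] by simp
  have f1: "finite {n. c1 n \<noteq> \<zero>\<^bsub>W\<^esub>}" "finite {n. c2 n \<noteq> \<zero>\<^bsub>W\<^esub>}" using S1 S2 finite_subset by auto
  show ?thesis using decomp_ex1[OF m] c1 c2 e1 e2 f1 by blast
qed

lemma phi_finsum: "finite S \<Longrightarrow> f \<in> S \<rightarrow> carrier W \<Longrightarrow> \<phi> (finsum W f S) = finsum W (\<lambda>i. \<phi> (f i)) S"
proof (induction S rule: finite_induct)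
  case empty then show ?case by (simp add: phi_zero)
next
  case (insert x S)
  then have "f \<in> S \<rightarrow> carrier W" "f x \<in> carrier W" by auto
  moreover have "(\<lambda>i. \<phi> (f i)) \<in> S \<rightarrow> carrier W" using insert phi_closed by auto
  ultimately show ?case using insert phi_add phi_closed by simp
qed

lemma phi_neg: "w \<in> carrier W \<Longrightarrow> \<phi> (\<ominus>\<^bsub>W\<^esub> w) = \<ominus>\<^bsub>W\<^esub> \<phi> w"
proof -
  assume w: "w \<in> carrier W"
  have "\<phi> (\<ominus>\<^bsub>W\<^esub> w) \<oplus>\<^bsub>W\<^esub> \<phi> w = \<zero>\<^bsub>W\<^esub>"
    using w phi_add[of "\<ominus>\<^bsub>W\<^esub> w" w] phi_zero by (simp add: M.l_neg)
  then show ?thesis using w phi_closed by (metis M.add.inv_closed M.minus_equality)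
qed

lemma no_b_image:
  assumes u: "u \<in> D b" and w: "w \<in> carrier W" and eq: "u = \<phi> w"
  shows "u = \<zero>\<^bsub>W\<^esub>"
proof -
  obtain c where c: "\<forall>n. c n \<in> D n" "finite {n. c n \<noteq> \<zero>\<^bsub>W\<^esub>}" "w = finsum W c {n. c n \<noteq> \<zero>\<^bsub>W\<^esub>}"
    using decomp_ex1[OF w] by blast
  define S where "S = {n. c n \<noteq> \<zero>\<^bsub>W\<^esub>}"
  have cc: "c \<in> S \<rightarrow> carrier W" using c D_carrier by blast
  define e where "e k = (if k - 1 \<in> S then \<phi> (c (k - 1)) else \<zero>\<^bsub>W\<^esub>)" for k
  have e: "\<forall>k. e k \<in> D k"
  proof
    fix k show "e k \<in> D k" using D_phi[of "c (k - 1)" "k - 1"] c(1) D_zero by (auto simp: e_def)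
  qed
  have inj: "inj_on (\<lambda>n. n + 1) S" by (auto simp: inj_on_def)
  have "finsum W e ((\<lambda>n. n + 1) ` S) = finsum W (\<lambda>n. e (n + 1)) S"
    by (rule M.finsum_reindex[OF _ inj]) (use e D_carrier in blast)
  also have "\<dots> = finsum W (\<lambda>n. \<phi> (c n)) S"
    by (rule M.finsum_cong') (use cc phi_closed in \<open>auto simp: e_def\<close>)
  also have "\<dots> = u" using phi_finsum[OF c(2), of c] cc c(3) eq unfolding S_def by simp
  finally have esum: "finsum W e ((\<lambda>n. n + 1) ` S) = u" .
  define e1 where "e1 k = (if k = b then u else \<zero>\<^bsub>W\<^esub>)" for k
  have e1: "\<forall>k. e1 k \<in> D k" using u D_zero by (auto simp: e1_def)
  have ub: "u \<in> carrier W" using u D_carrier by auto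
  have e1sum: "finsum W e1 {b} = u" using M.finsum_insert[of "{}" b e1] ub by (simp add: e1_def)
  have "e1 = e"
  proof (rule decomp_unique[OF e1 e])
    show "finite {b}" by simp
    show "{n. e1 n \<noteq> \<zero>\<^bsub>W\<^esub>} \<subseteq> {b}" by (auto simp: e1_def)
    show "finite ((\<lambda>n. n + 1) ` S)" using c(2) S_def by simp
    show "{n. e n \<noteq> \<zero>\<^bsub>W\<^esub>} \<subseteq> (\<lambda>n. n + 1) ` S"
    proof
      fix x assume "x \<in> {n. e n \<noteq> \<zero>\<^bsub>W\<^esub>}"
      then have "x - 1 \<in> S" by (auto simp: e_def split: if_splits)
      then show "x \<in> (\<lambda>n. n + 1) ` S" by (intro image_eqI[of x _ "x - 1"]) auto
    qed
    show "finsum W e1 {b} = finsum W e ((\<lambda>n. n + 1) ` S)" using e1sum esum by simp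
  qed
  then have "u = e b" by (metis e1_def)
  moreover have "c (b - 1) = \<zero>\<^bsub>W\<^esub>"
  proof -
    have "D (b - 1) = {\<zero>\<^bsub>W\<^esub>}" using low by simp
    then show ?thesis using c(1) by blast
  qed
  ultimately show ?thesis by (auto simp: e_def S_def phi_zero)
qed

end


context frobset begin

definition phi' :: "(nat \<Rightarrow> 'a) set \<times> 'm \<Rightarrow> (nat \<Rightarrow> 'a) set \<times> 'm" where
  "phi' X = (cls \<zero>\<^bsub>W\<^esub>, val (fst X) \<oplus>\<^bsub>W\<^esub> \<phi> (snd X))"
definition iota :: "'m \<Rightarrow> (nat \<Rightarrow> 'a) set \<times> 'm" where "iota w = (cls \<zero>\<^bsub>W\<^esub>, w)"
definition psi :: "(nat \<Rightarrow> 'a) \<Rightarrow> (nat \<Rightarrow> 'a) set \<times> 'm" where "psi r = (cls (F r), \<zero>\<^bsub>W\<^esub>)"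
definition D' :: "int \<Rightarrow> ((nat \<Rightarrow> 'a) set \<times> 'm) set" where
  "D' n = (if n = b - 1 then psi ` V else iota ` D n)"

lemma phi'_simp [simp]: "u \<in> U \<Longrightarrow> phi' (cls u, w) = (cls \<zero>\<^bsub>W\<^esub>, u \<oplus>\<^bsub>W\<^esub> \<phi> w)"
  by (simp add: phi'_def)

lemma W'_repr: "X \<in> carrier W' \<Longrightarrow> X = (cls (val (fst X)), snd X) \<and> val (fst X) \<in> U \<and> snd X \<in> carrier W"
  by (erule W'_E) auto

lemma W'_am: "abelian_monoid W'" using W'_abelian abelian_group_def by blast

lemma W'_finsum:
  "finite S \<Longrightarrow> f \<in> S \<rightarrow> carrier W' \<Longrightarrow>
   finsum W' f S = (cls (finsum W (\<lambda>i. val (fst (f i))) S), finsum W (\<lambda>i. snd (f i)) S)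
   \<and> finsum W (\<lambda>i. val (fst (f i))) S \<in> U"
proof (induction S rule: finite_induct)
  case empty then show ?case by (simp add: abelian_monoid.finsum_empty[OF W'_am] W'_zero)
next
  case (insert x S)
  have fx: "f x \<in> carrier W'" and fS: "f \<in> S \<rightarrow> carrier W'" using insert by auto
  have v: "(\<lambda>i. val (fst (f i))) \<in> S \<rightarrow> carrier W" "(\<lambda>i. snd (f i)) \<in> S \<rightarrow> carrier W"
    using fS W'_repr U_carrier by blast+
  have IH: "finsum W' f S = (cls (finsum W (\<lambda>i. val (fst (f i))) S), finsum W (\<lambda>i. snd (f i)) S)"
     "finsum W (\<lambda>i. val (fst (f i))) S \<in> U" using insert fS by auto
  obtain ux wx where fx': "f x = (cls ux, wx)" "ux \<in> U" "wx \<in> carrier W" using fx by (rule W'_E)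
  have "finsum W' f (insert x S) = f x \<oplus>\<^bsub>W'\<^esub> finsum W' f S"
    by (rule abelian_monoid.finsum_insert[OF W'_am insert(1,2) fS fx])
  also have "\<dots> = (cls (finsum W (\<lambda>i. val (fst (f i))) (insert x S)), finsum W (\<lambda>i. snd (f i)) (insert x S))"
    using fx' IH v insert(1,2) by simp
  finally show ?case using fx' IH v insert(1,2) by simp
qed

lemma iota_carrier [simp]: "w \<in> carrier W \<Longrightarrow> iota w \<in> carrier W'"
  by (simp add: iota_def)
lemma psi_carrier [simp]: "r \<in> V \<Longrightarrow> psi r \<in> carrier W'"
  by (auto simp: psi_def)
lemma iota_zero: "iota \<zero>\<^bsub>W\<^esub> = \<zero>\<^bsub>W'\<^esub>" by (simp add: iota_def W'_zero)
lemma psi_zero: "psi (\<lambda>i. \<zero>\<^bsub>R\<^esub>) = \<zero>\<^bsub>W'\<^esub>" by (simp add: psi_def W'_zero F_zero)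
lemma iota_add: "x \<in> carrier W \<Longrightarrow> y \<in> carrier W \<Longrightarrow> iota (x \<oplus>\<^bsub>W\<^esub> y) = iota x \<oplus>\<^bsub>W'\<^esub> iota y"
  by (simp add: iota_def)
lemma iota_smult: "a \<in> carrier R \<Longrightarrow> x \<in> carrier W \<Longrightarrow> iota (a \<odot>\<^bsub>W\<^esub> x) = a \<odot>\<^bsub>W'\<^esub> iota x"
  by (simp add: iota_def)
lemma iota_inj: "iota x = iota y \<longleftrightarrow> x = y" by (simp add: iota_def)
lemma phi'_iota: "x \<in> carrier W \<Longrightarrow> phi' (iota x) = iota (\<phi> x)"
  by (simp add: iota_def phi_closed)
lemma psi_add: "r \<in> V \<Longrightarrow> s \<in> V \<Longrightarrow> psi (\<lambda>i. r i \<oplus>\<^bsub>R\<^esub> s i) = psi r \<oplus>\<^bsub>W'\<^esub> psi s"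
  by (simp add: psi_def F_add)
lemma psi_smult: "a \<in> carrier R \<Longrightarrow> r \<in> V \<Longrightarrow> psi (\<lambda>i. a \<otimes>\<^bsub>R\<^esub> r i) = a \<odot>\<^bsub>W'\<^esub> psi r"
  by (simp add: psi_def F_smult)
lemma phi'_psi: "r \<in> V \<Longrightarrow> phi' (psi r) = iota (F r)"
  by (simp add: psi_def iota_def phi_zero F_carrier)

lemma W'_frob: "frob_module R p W' phi'"
  unfolding frob_module_def
proof (intro conjI ballI)
  show "module R W'" by (rule W'_module)
  show "phi' \<in> carrier W' \<rightarrow> carrier W'"
  proof
    fix X assume X: "X \<in> carrier W'"
    from X obtain u w where x: "X = (cls u, w)" "u \<in> U" "w \<in> carrier W" by (rule W'_E)
    show "phi' X \<in> carrier W'" using x by (simp add: phi_closed)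
  qed
next
  fix X Y assume X: "X \<in> carrier W'" and Y: "Y \<in> carrier W'"
  from X obtain u w where x: "X = (cls u, w)" "u \<in> U" "w \<in> carrier W" by (rule W'_E)
  from Y obtain v z where y: "Y = (cls v, z)" "v \<in> U" "z \<in> carrier W" by (rule W'_E)
  show "phi' (X \<oplus>\<^bsub>W'\<^esub> Y) = phi' X \<oplus>\<^bsub>W'\<^esub> phi' Y"
    using x y by (simp add: phi_add phi_closed M.a_ac)
next
  fix a X assume a: "a \<in> carrier R" and X: "X \<in> carrier W'"
  from X obtain u w where x: "X = (cls u, w)" "u \<in> U" "w \<in> carrier W" by (rule W'_E)
  show "phi' (a \<odot>\<^bsub>W'\<^esub> X) = (a [^]\<^bsub>R\<^esub> p) \<odot>\<^bsub>W'\<^esub> phi' X"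
    using x a by (simp add: phi_smult phi_closed smult_r_distr)
qed

lemma W'_mono: "frob_mono R W \<phi> W' phi' iota"
  unfolding frob_mono_def
  by (auto simp: inj_on_def iota_inj iota_add iota_smult phi'_iota)

lemma W'_submoduleI:
  assumes "H \<subseteq> carrier W'" "\<zero>\<^bsub>W'\<^esub> \<in> H"
    and add: "\<And>X Y. X \<in> H \<Longrightarrow> Y \<in> H \<Longrightarrow> X \<oplus>\<^bsub>W'\<^esub> Y \<in> H"
    and sm: "\<And>a X. a \<in> carrier R \<Longrightarrow> X \<in> H \<Longrightarrow> a \<odot>\<^bsub>W'\<^esub> X \<in> H"
  shows "submodule H R W'"
proof (rule module.submoduleI[OF W'_module])
  fix X assume X: "X \<in> H"
  have "\<ominus>\<^bsub>W'\<^esub> X = (\<ominus>\<^bsub>R\<^esub> \<one>\<^bsub>R\<^esub>) \<odot>\<^bsub>W'\<^esub> X"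
    using module.smult_l_minus[OF W'_module, of "\<one>\<^bsub>R\<^esub>" X] X assms(1) module.smult_one[OF W'_module]
    by auto
  then show "\<ominus>\<^bsub>W'\<^esub> X \<in> H" using sm X by simp
qed (use assms in auto)

lemma D'_sub: "submodule (D' n) R W'"
proof (cases "n = b - 1")
  case True
  have "submodule (psi ` V) R W'"
  proof (rule W'_submoduleI)
    show "psi ` V \<subseteq> carrier W'" by auto
    show "\<zero>\<^bsub>W'\<^esub> \<in> psi ` V" using psi_zero[symmetric] zero_V by blast
    fix X Y assume "X \<in> psi ` V" "Y \<in> psi ` V"
    then obtain r s where "r \<in> V" "s \<in> V" "X = psi r" "Y = psi s" by blast
    then show "X \<oplus>\<^bsub>W'\<^esub> Y \<in> psi ` V" using psi_add add_V by (intro image_eqI[of _ _ "\<lambda>i. r i \<oplus>\<^bsub>R\<^esub> s i"]) auto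
  next
    fix a X assume a: "a \<in> carrier R" and "X \<in> psi ` V"
    then obtain r where "r \<in> V" "X = psi r" by blast
    then show "a \<odot>\<^bsub>W'\<^esub> X \<in> psi ` V" using psi_smult smult_V a by (intro image_eqI[of _ _ "\<lambda>i. a \<otimes>\<^bsub>R\<^esub> r i"]) auto
  qed
  then show ?thesis using True by (simp add: D'_def)
next
  case False
  have "submodule (iota ` D n) R W'"
  proof (rule W'_submoduleI)
    show "iota ` D n \<subseteq> carrier W'" using D_carrier iota_carrier by blast
    show "\<zero>\<^bsub>W'\<^esub> \<in> iota ` D n" using iota_zero[symmetric] D_zero by blast
    fix X Y assume "X \<in> iota ` D n" "Y \<in> iota ` D n"
    then obtain x y where "x \<in> D n" "y \<in> D n" "X = iota x" "Y = iota y" by blast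
    moreover have "x \<in> carrier W" "y \<in> carrier W" using calculation D_carrier by auto
    ultimately show "X \<oplus>\<^bsub>W'\<^esub> Y \<in> iota ` D n" using iota_add D_add by (intro image_eqI[of _ _ "x \<oplus>\<^bsub>W\<^esub> y"]) auto
  next
    fix a X assume a: "a \<in> carrier R" and "X \<in> iota ` D n"
    then obtain x where "x \<in> D n" "X = iota x" by blast
    moreover have "x \<in> carrier W" using calculation D_carrier by auto
    ultimately show "a \<odot>\<^bsub>W'\<^esub> X \<in> iota ` D n" using iota_smult D_smult a by (intro image_eqI[of _ _ "a \<odot>\<^bsub>W\<^esub> x"]) auto
  qed
  then show ?thesis using False by (simp add: D'_def)
qed

end


context frobset begin

lemma Dlow: "n < b \<Longrightarrow> D n = {\<zero>\<^bsub>W\<^esub>}" using low by auto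

lemma D'_low: "n < b - 1 \<Longrightarrow> D' n = {\<zero>\<^bsub>W'\<^esub>}"
  using Dlow[of n] by (simp add: D'_def iota_zero)

lemma D'_high: "n \<ge> b \<Longrightarrow> D' n = iota ` D n"
  by (simp add: D'_def)

lemma D'_phi: "phi' ` D' n \<subseteq> D' (n + 1)"
proof
  fix Y assume "Y \<in> phi' ` D' n"
  then obtain X where X: "X \<in> D' n" "Y = phi' X" by blast
  show "Y \<in> D' (n + 1)"
  proof (cases "n = b - 1")
    case True
    then obtain r where r: "r \<in> V" "X = psi r" using X by (auto simp: D'_def)
    then show ?thesis using True X phi'_psi F_Db by (auto simp: D'_def)
  next
    case False
    then obtain x where x: "x \<in> D n" "X = iota x" using X by (auto simp: D'_def)
    have xc: "x \<in> carrier W" using x D_carrier by auto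
    show ?thesis
    proof (cases "n + 1 = b - 1")
      case True
      then have "x = \<zero>\<^bsub>W\<^esub>" using x Dlow[of n] by auto
      then have "Y = \<zero>\<^bsub>W'\<^esub>" using X x phi'_iota[of x] by (simp add: phi_zero iota_zero)
      then show ?thesis using True psi_zero zero_V by (auto simp: D'_def intro: image_eqI[of _ _ "\<lambda>i. \<zero>\<^bsub>R\<^esub>"])
    next
      case False
      then show ?thesis using X x xc phi'_iota[of x] D_phi[of x n] by (auto simp: D'_def)
    qed
  qed
qed

lemma D'_carrier: "D' n \<subseteq> carrier W'"
  using module.submoduleE(1)[OF W'_module D'_sub] .

lemma W'_decomp:
  assumes m: "m \<in> carrier W'"
  shows "\<exists>!c :: int \<Rightarrow> (nat \<Rightarrow> 'a) set \<times> 'm. (\<forall>n. c n \<in> D' n) \<and> finite {n. c n \<noteq> \<zero>\<^bsub>W'\<^esub>}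
            \<and> m = finsum W' c {n. c n \<noteq> \<zero>\<^bsub>W'\<^esub>}"
proof -
  from m obtain u w where mw: "m = (cls u, w)" "u \<in> U" "w \<in> carrier W" by (rule W'_E)
  obtain c where c: "\<forall>n. c n \<in> D n" "finite {n. c n \<noteq> \<zero>\<^bsub>W\<^esub>}" "w = finsum W c {n. c n \<noteq> \<zero>\<^bsub>W\<^esub>}"
    using decomp_ex1[OF mw(3)] by blast
  have cc: "c n \<in> carrier W" for n using c(1) D_carrier by blast
  have cb: "c (b - 1) = \<zero>\<^bsub>W\<^esub>" using c(1) Dlow[of "b - 1"] by auto
  define c' where "c' n = (if n = b - 1 then (cls u, \<zero>\<^bsub>W\<^esub>) else iota (c n))" for n
  have c'D: "\<forall>n. c' n \<in> D' n"
  proof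
    fix n show "c' n \<in> D' n"
    proof (cases "n = b - 1")
      case True
      obtain r where "r \<in> V" "u = F r" using mw by auto
      then show ?thesis using True by (auto simp: c'_def D'_def psi_def)
    next
      case False then show ?thesis using c(1) by (auto simp: c'_def D'_def)
    qed
  qed
  have c'c: "c' n \<in> carrier W'" for n using c'D D'_carrier by blast
  define S where "S = insert (b - 1) {n. c n \<noteq> \<zero>\<^bsub>W\<^esub>}"
  have S: "finite S" using c(2) by (simp add: S_def)
  have suppS: "{n. c' n \<noteq> \<zero>\<^bsub>W'\<^esub>} \<subseteq> S"
    by (auto simp: S_def c'_def iota_zero[symmetric] iota_inj)
  have fin': "finite {n. c' n \<noteq> \<zero>\<^bsub>W'\<^esub>}" using S suppS finite_subset by blast
  have vals: "val (fst (c' n)) = (if n = b - 1 then u else \<zero>\<^bsub>W\<^esub>)" for n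
    using mw by (simp add: c'_def iota_def)
  have snds: "snd (c' n) = c n" for n
    using cb by (simp add: c'_def iota_def)
  have "finsum W' c' {n. c' n \<noteq> \<zero>\<^bsub>W'\<^esub>} = finsum W' c' S"
    by (rule abelian_monoid.finsum_supp[OF W'_am S suppS]) (use c'c in blast)
  also have "\<dots> = (cls (finsum W (\<lambda>i. val (fst (c' i))) S), finsum W (\<lambda>i. snd (c' i)) S)"
    using W'_finsum[OF S] c'c by blast
  also have "finsum W (\<lambda>i. val (fst (c' i))) S = u"
    unfolding vals using M.add.finprod_singleton_swap[of "b - 1" S "\<lambda>i. u"] S mw
    by (auto simp: S_def)
  also have "finsum W (\<lambda>i. snd (c' i)) S = w"
    unfolding snds c(3) by (rule finsum_supp_W[symmetric]) (use S cc in \<open>auto simp: S_def\<close>)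
  finally have msum: "m = finsum W' c' {n. c' n \<noteq> \<zero>\<^bsub>W'\<^esub>}" using mw by simp
  show ?thesis
  proof (rule ex1I[of _ c'])
    show "(\<forall>n. c' n \<in> D' n) \<and> finite {n. c' n \<noteq> \<zero>\<^bsub>W'\<^esub>} \<and> m = finsum W' c' {n. c' n \<noteq> \<zero>\<^bsub>W'\<^esub>}"
      using c'D fin' msum by blast
  next
    fix d' assume d': "(\<forall>n. d' n \<in> D' n) \<and> finite {n. d' n \<noteq> \<zero>\<^bsub>W'\<^esub>} \<and> m = finsum W' d' {n. d' n \<noteq> \<zero>\<^bsub>W'\<^esub>}"
    have d'c: "d' n \<in> carrier W'" for n using d' D'_carrier by blast
    define T where "T = insert (b - 1) {n. d' n \<noteq> \<zero>\<^bsub>W'\<^esub>}"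
    have T: "finite T" using d' by (simp add: T_def)
    have suppT: "{n. d' n \<noteq> \<zero>\<^bsub>W'\<^esub>} \<subseteq> T" by (auto simp: T_def)
    have mT: "m = finsum W' d' T"
      using d' abelian_monoid.finsum_supp[OF W'_am T suppT] d'c by auto
    have Wf: "finsum W' d' T = (cls (finsum W (\<lambda>i. val (fst (d' i))) T), finsum W (\<lambda>i. snd (d' i)) T)"
      "finsum W (\<lambda>i. val (fst (d' i))) T \<in> U"
      using W'_finsum[OF T] d'c by blast+
    have mT2: "m = (cls (finsum W (\<lambda>i. val (fst (d' i))) T), finsum W (\<lambda>i. snd (d' i)) T)"
      using mT Wf by simp
    have "d' (b - 1) \<in> psi ` V" using d' by (metis D'_def)
    then obtain r where r: "r \<in> V" "d' (b - 1) = psi r" by blast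
    have dhi: "\<exists>x \<in> D n. d' n = iota x" if "n \<noteq> b - 1" for n
    proof -
      have "d' n \<in> iota ` D n" using d' that by (metis D'_def)
      then show ?thesis by blast
    qed
    define d where "d n = snd (d' n)" for n
    have dD: "\<forall>n. d n \<in> D n"
    proof
      fix n show "d n \<in> D n"
      proof (cases "n = b - 1")
        case True then show ?thesis using r D_zero by (simp add: d_def psi_def)
      next
        case False then show ?thesis using dhi[OF False] by (auto simp: d_def iota_def)
      qed
    qed
    have dsupp: "{n. d n \<noteq> \<zero>\<^bsub>W\<^esub>} \<subseteq> T" by (auto simp: d_def T_def W'_zero)
    have vald: "val (fst (d' n)) = (if n = b - 1 then F r else \<zero>\<^bsub>W\<^esub>)" for n
    proof (cases "n = b - 1")
      case True then show ?thesis using r by (simp add: psi_def)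
    next
      case False then show ?thesis using dhi[OF False] by (auto simp: iota_def)
    qed
    have Fr: "F r \<in> U" using r by auto
    have "finsum W (\<lambda>i. val (fst (d' i))) T = F r"
      unfolding vald using M.add.finprod_singleton_swap[of "b - 1" T "\<lambda>i. F r"] T Fr
      by (auto simp: T_def)
    then have uFr: "u = F r" using mT2 mw Fr Wf(2) by simp
    have deq: "d = (\<lambda>n. snd (d' n))" by (simp add: d_def fun_eq_iff)
    have wd: "w = finsum W d T" using mT2 mw by (simp add: deq)
    have "d = c"
      by (rule decomp_unique[OF dD c(1) T dsupp c(2) order_refl]) (use wd c(3) in simp)
    show "d' = c'"
    proof
      fix n show "d' n = c' n"
      proof (cases "n = b - 1")
        case True then show ?thesis using r uFr by (simp add: c'_def psi_def)
      next
        case False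
        then obtain x where x: "x \<in> D n" "d' n = iota x" using dhi by blast
        then have "x = c n" using \<open>d = c\<close> unfolding d_def by (metis iota_def snd_conv)
        then show ?thesis using x False by (simp add: c'_def)
      qed
    qed
  qed
qed

lemma W'_graded: "graded_frob_module R p W' phi' D'"
  unfolding graded_frob_module_def
  using W'_frob D'_sub D'_phi W'_decomp by blast

end


definition annseq :: "('a, 'c) ring_scheme \<Rightarrow> ('a, 'm) module \<Rightarrow> ('m \<Rightarrow> 'm) \<Rightarrow> 'm set \<Rightarrow> nat \<Rightarrow> 'a set" where
  "annseq R M \<phi> N n = {r \<in> carrier R. \<forall>m\<in>N. r \<odot>\<^bsub>M\<^esub> (\<phi> ^^ n) m = \<zero>\<^bsub>M\<^esub>}"

locale modu = module R M for R :: "('a,'c) ring_scheme" and M :: "('a,'m) module"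

context modu begin

lemma fm_phi_zero:
  assumes fm: "frob_module R p M \<phi>"
  shows "\<phi> \<zero>\<^bsub>M\<^esub> = \<zero>\<^bsub>M\<^esub>"
proof -
  have cl: "\<phi> \<zero>\<^bsub>M\<^esub> \<in> carrier M" using fm unfolding frob_module_def by auto
  have "\<phi> \<zero>\<^bsub>M\<^esub> = \<phi> \<zero>\<^bsub>M\<^esub> \<oplus>\<^bsub>M\<^esub> \<phi> \<zero>\<^bsub>M\<^esub>"
    using fm unfolding frob_module_def by (metis M.l_zero M.zero_closed)
  then show ?thesis using cl by (metis M.l_zero M.zero_closed M.add.right_cancel)
qed

lemma fs_pow:
  assumes N: "frob_submodule R M \<phi> N" and m: "m \<in> N"
  shows "(\<phi> ^^ n) m \<in> N"
  using m N by (induction n) (auto simp: frob_submodule_def)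

lemma fs_carrier:
  assumes N: "frob_submodule R M \<phi> N"
  shows "N \<subseteq> carrier M"
  using N submoduleE(1) unfolding frob_submodule_def by blast

lemma grann_eq:
  assumes fm: "frob_module R p M \<phi>" and N: "frob_submodule R M \<phi> N"
  shows "grann R p M \<phi> N = annseq R M \<phi> N"
proof -
  define A where "A = annseq R M \<phi> N"
  have Nc: "N \<subseteq> carrier M" by (rule fs_carrier[OF N])
  have yc: "(\<phi> ^^ n) m \<in> carrier M" if "m \<in> N" for n m using fs_pow[OF N that] Nc by blast
  have Asub: "A n \<subseteq> carrier R" for n by (auto simp: A_def annseq_def)
  have id: "ideal (A n) R" for n
  proof (rule idealI[OF R.ring_axioms])
    show "subgroup (A n) (add_monoid R)"
    proof (rule R.add.subgroupI)
      show "A n \<subseteq> carrier R" by (rule Asub)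
      show "A n \<noteq> {}" using yc by (auto simp: A_def annseq_def intro!: exI[of _ "\<zero>\<^bsub>R\<^esub>"])
      fix a c assume a: "a \<in> A n" and c: "c \<in> A n"
      show "\<ominus>\<^bsub>R\<^esub> a \<in> A n" using a yc by (auto simp: A_def annseq_def smult_l_minus)
      show "a \<oplus>\<^bsub>R\<^esub> c \<in> A n" using a c yc by (auto simp: A_def annseq_def smult_l_distr)
    qed
  next
    fix a x assume a: "a \<in> A n" and x: "x \<in> carrier R"
    have ac: "a \<in> carrier R" using a Asub by blast
    have "(x \<otimes>\<^bsub>R\<^esub> a) \<odot>\<^bsub>M\<^esub> (\<phi> ^^ n) m = \<zero>\<^bsub>M\<^esub>" if m: "m \<in> N" for m
    proof -
      have "(x \<otimes>\<^bsub>R\<^esub> a) \<odot>\<^bsub>M\<^esub> (\<phi> ^^ n) m = x \<odot>\<^bsub>M\<^esub> (a \<odot>\<^bsub>M\<^esub> (\<phi> ^^ n) m)"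
        using smult_assoc1[OF x ac yc[OF m]] .
      also have "\<dots> = \<zero>\<^bsub>M\<^esub>" using a m x by (simp add: A_def annseq_def)
      finally show ?thesis .
    qed
    then show xa: "x \<otimes>\<^bsub>R\<^esub> a \<in> A n" using ac x by (auto simp: A_def annseq_def)
    show "a \<otimes>\<^bsub>R\<^esub> x \<in> A n" using xa ac x by (simp add: R.m_comm)
  qed
  have frob: "r [^]\<^bsub>R\<^esub> p \<in> A (Suc n)" if r: "r \<in> A n" for r n
  proof -
    have "r [^]\<^bsub>R\<^esub> p \<odot>\<^bsub>M\<^esub> (\<phi> ^^ Suc n) m = \<zero>\<^bsub>M\<^esub>" if m: "m \<in> N" for m
    proof -
      have "r [^]\<^bsub>R\<^esub> p \<odot>\<^bsub>M\<^esub> (\<phi> ^^ Suc n) m = \<phi> (r \<odot>\<^bsub>M\<^esub> (\<phi> ^^ n) m)"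
      proof -
        have "r \<in> carrier R" using r Asub by blast
        then show ?thesis using fm yc[OF m, of n] unfolding frob_module_def by simp
      qed
      also have "\<dots> = \<zero>\<^bsub>M\<^esub>" using r m fm_phi_zero[OF fm] by (auto simp: A_def annseq_def)
      finally show ?thesis .
    qed
    then show ?thesis using r Asub by (auto simp: A_def annseq_def)
  qed
  have mono: "A n \<subseteq> A (Suc n)" for n
  proof
    fix r assume r: "r \<in> A n"
    have "r \<odot>\<^bsub>M\<^esub> (\<phi> ^^ Suc n) m = \<zero>\<^bsub>M\<^esub>" if m: "m \<in> N" for m
    proof -
      have "\<phi> m \<in> N" using N m unfolding frob_submodule_def by auto
      then show ?thesis using r by (simp add: A_def annseq_def funpow_Suc_right del: funpow.simps)
    qed
    then show "r \<in> A (Suc n)" using r Asub by (auto simp: A_def annseq_def)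
  qed
  have gA: "graded_two_sided_ideal R p A"
    unfolding graded_two_sided_ideal_def using id frob mono by blast
  have annA: "annihilates M \<phi> A N"
    unfolding annihilates_def A_def annseq_def by auto
  have maxA: "\<forall>n. J n \<subseteq> A n" if J: "graded_two_sided_ideal R p J" "annihilates M \<phi> J N" for J
  proof
    fix n
    have "J n \<subseteq> carrier R"
      using J(1) unfolding graded_two_sided_ideal_def by (meson additive_subgroup.a_subset ideal.axioms(1))
    then show "J n \<subseteq> A n" using J(2) unfolding annihilates_def A_def annseq_def by auto
  qed
  show ?thesis
    unfolding grann_def A_def[symmetric]
  proof (rule the_equality)
    show "graded_two_sided_ideal R p A \<and> annihilates M \<phi> A N \<and>
      (\<forall>J. graded_two_sided_ideal R p J \<and> annihilates M \<phi> J N \<longrightarrow> (\<forall>n. J n \<subseteq> A n))"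
      using gA annA maxA by blast
  next
    fix I assume I: "graded_two_sided_ideal R p I \<and> annihilates M \<phi> I N \<and>
      (\<forall>J. graded_two_sided_ideal R p J \<and> annihilates M \<phi> J N \<longrightarrow> (\<forall>n. J n \<subseteq> I n))"
    have "I n = A n" for n using I maxA[of I] gA annA by (meson subset_antisym)
    then show "I = A" by auto
  qed
qed

lemma ann_torsion:
  assumes fm: "frob_module R p M \<phi>" and tf: "x_torsion_free M \<phi>" and N: "frob_submodule R M \<phi> N"
    and p: "0 < p"
  shows "annseq R M \<phi> N (Suc n) \<subseteq> annseq R M \<phi> N n"
proof
  fix r assume r: "r \<in> annseq R M \<phi> N (Suc n)"
  have rc: "r \<in> carrier R" using r by (auto simp: annseq_def)
  have Nc: "N \<subseteq> carrier M" by (rule fs_carrier[OF N])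
  have "r \<odot>\<^bsub>M\<^esub> (\<phi> ^^ n) m = \<zero>\<^bsub>M\<^esub>" if m: "m \<in> N" for m
  proof -
    define y where "y = (\<phi> ^^ n) m"
    have y: "y \<in> carrier M" using fs_pow[OF N m] Nc by (auto simp: y_def)
    have py: "\<phi> y \<in> carrier M" using fm y unfolding frob_module_def by auto
    have ry: "r \<odot>\<^bsub>M\<^esub> \<phi> y = \<zero>\<^bsub>M\<^esub>" using r m by (simp add: annseq_def y_def)
    have pp: "r [^]\<^bsub>R\<^esub> p = r [^]\<^bsub>R\<^esub> (p - 1) \<otimes>\<^bsub>R\<^esub> r"
      using p R.nat_pow_Suc[of r "p - 1"] by simp
    have "\<phi> (r \<odot>\<^bsub>M\<^esub> y) = r [^]\<^bsub>R\<^esub> p \<odot>\<^bsub>M\<^esub> \<phi> y" using fm rc y unfolding frob_module_def by auto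
    also have "\<dots> = r [^]\<^bsub>R\<^esub> (p - 1) \<odot>\<^bsub>M\<^esub> (r \<odot>\<^bsub>M\<^esub> \<phi> y)"
      unfolding pp using rc py by (simp add: smult_assoc1)
    also have "\<dots> = \<zero>\<^bsub>M\<^esub>" using ry rc by simp
    finally show ?thesis using tf rc y unfolding x_torsion_free_def y_def by auto
  qed
  then show "r \<in> annseq R M \<phi> N n" using rc by (auto simp: annseq_def)
qed

end

lemma frob_mono_pow:
  assumes mono: "frob_mono R M \<phi> M' \<phi>' \<iota>" and cl: "\<phi> \<in> carrier M \<rightarrow> carrier M" and m: "m \<in> carrier M"
  shows "\<iota> ((\<phi> ^^ n) m) = (\<phi>' ^^ n) (\<iota> m)"
proof (induction n)
  case 0 then show ?case by simp
next
  case (Suc n)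
  have "(\<phi> ^^ n) m \<in> carrier M" using m cl by (induction n) auto
  then show ?case using Suc mono unfolding frob_mono_def by simp
qed



context frobset begin

lemma W'_tf: "x_torsion_free W \<phi> \<Longrightarrow> x_torsion_free W' phi'"
  unfolding x_torsion_free_def
proof (intro ballI impI)
  fix X assume tf: "\<forall>m\<in>carrier W. \<phi> m = \<zero>\<^bsub>W\<^esub> \<longrightarrow> m = \<zero>\<^bsub>W\<^esub>"
    and X: "X \<in> carrier W'" and z: "phi' X = \<zero>\<^bsub>W'\<^esub>"
  from X obtain u w where x: "X = (cls u, w)" "u \<in> U" "w \<in> carrier W" by (rule W'_E)
  have "u \<oplus>\<^bsub>W\<^esub> \<phi> w = \<zero>\<^bsub>W\<^esub>" using z x by (simp add: W'_zero)
  then have "u = \<ominus>\<^bsub>W\<^esub> \<phi> w" using x phi_closed U_carrier by (metis M.minus_equality M.a_comm)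
  then have "u = \<phi> (\<ominus>\<^bsub>W\<^esub> w)" using x phi_neg by simp
  then have u0: "u = \<zero>\<^bsub>W\<^esub>" using no_b_image[of u "\<ominus>\<^bsub>W\<^esub> w"] x U_Db by auto
  then have "\<phi> w = \<zero>\<^bsub>W\<^esub>" using \<open>u \<oplus>\<^bsub>W\<^esub> \<phi> w = \<zero>\<^bsub>W\<^esub>\<close> x phi_closed by simp
  then have "w = \<zero>\<^bsub>W\<^esub>" using tf x by auto
  then show "X = \<zero>\<^bsub>W'\<^esub>" using x u0 by (simp add: W'_zero)
qed

lemma modu_W: "modu R W" by (simp add: modu_def module_axioms)
lemma modu_W': "modu R W'" by (simp add: modu_def W'_module)

lemma phi'_pow_iota: "x \<in> carrier W \<Longrightarrow> (phi' ^^ n) (iota x) = iota ((\<phi> ^^ n) x)"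
  using frob_mono_pow[OF W'_mono] fm unfolding frob_module_def by metis

lemma phi_pow_carrier: "x \<in> carrier W \<Longrightarrow> (\<phi> ^^ n) x \<in> carrier W"
  by (induction n) (auto simp: phi_closed)

lemma iota_eq_zero: "iota x = \<zero>\<^bsub>W'\<^esub> \<longleftrightarrow> x = \<zero>\<^bsub>W\<^esub>"
  by (simp add: iota_zero[symmetric] iota_inj)

lemma grann_set_eq:
  assumes tf: "x_torsion_free W \<phi>"
  shows "grann_set R p W' phi' = grann_set R p W \<phi>"
proof
  show "grann_set R p W \<phi> \<subseteq> grann_set R p W' phi'"
  proof
    fix G assume "G \<in> grann_set R p W \<phi>"
    then obtain N where N: "frob_submodule R W \<phi> N" and G: "G = grann R p W \<phi> N"
      unfolding grann_set_def by blast
    have Nc: "N \<subseteq> carrier W" using modu.fs_carrier[OF modu_W N] .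
    have Nsub: "submodule N R W" using N unfolding frob_submodule_def by blast
    define N' where "N' = iota ` N"
    have N': "frob_submodule R W' phi' N'"
      unfolding frob_submodule_def
    proof
      show "submodule N' R W'"
      proof (rule W'_submoduleI)
        show "N' \<subseteq> carrier W'" using Nc iota_carrier by (auto simp: N'_def)
        show "\<zero>\<^bsub>W'\<^esub> \<in> N'" using iota_zero[symmetric] submoduleE(2,5)[OF Nsub] Nsub
          unfolding N'_def submodule_def subgroup_def by auto
        fix X Y assume "X \<in> N'" "Y \<in> N'"
        then obtain x y where xy: "x \<in> N" "y \<in> N" "X = iota x" "Y = iota y" by (auto simp: N'_def)
        moreover have "x \<in> carrier W" "y \<in> carrier W" using xy Nc by auto
        ultimately show "X \<oplus>\<^bsub>W'\<^esub> Y \<in> N'" using iota_add[of x y] submoduleE(5)[OF Nsub]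
          unfolding N'_def by (intro image_eqI[of _ _ "x \<oplus>\<^bsub>W\<^esub> y"]) auto
      next
        fix a X assume a: "a \<in> carrier R" and "X \<in> N'"
        then obtain x where x: "x \<in> N" "X = iota x" by (auto simp: N'_def)
        moreover have "x \<in> carrier W" using x Nc by auto
        ultimately show "a \<odot>\<^bsub>W'\<^esub> X \<in> N'" using a iota_smult[of a x] submoduleE(4)[OF Nsub]
          unfolding N'_def by (intro image_eqI[of _ _ "a \<odot>\<^bsub>W\<^esub> x"]) auto
      qed
      show "phi' ` N' \<subseteq> N'"
      proof
        fix Y assume "Y \<in> phi' ` N'"
        then obtain x where x: "x \<in> N" "Y = phi' (iota x)" by (auto simp: N'_def)
        then have "Y = iota (\<phi> x)" using Nc phi'_iota by auto
        moreover have "\<phi> x \<in> N" using N x unfolding frob_submodule_def by auto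
        ultimately show "Y \<in> N'" by (auto simp: N'_def)
      qed
    qed
    have "annseq R W' phi' N' = annseq R W \<phi> N"
    proof (rule ext)
      fix n
      have "r \<odot>\<^bsub>W'\<^esub> (phi' ^^ n) (iota m) = \<zero>\<^bsub>W'\<^esub> \<longleftrightarrow> r \<odot>\<^bsub>W\<^esub> (\<phi> ^^ n) m = \<zero>\<^bsub>W\<^esub>"
        if "r \<in> carrier R" "m \<in> N" for r m
      proof -
        have mc: "m \<in> carrier W" using that Nc by auto
        have "r \<odot>\<^bsub>W'\<^esub> (phi' ^^ n) (iota m) = iota (r \<odot>\<^bsub>W\<^esub> (\<phi> ^^ n) m)"
          using mc that(1) by (simp add: phi'_pow_iota iota_smult phi_pow_carrier)
        then show ?thesis using iota_eq_zero by simp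
      qed
      then show "annseq R W' phi' N' n = annseq R W \<phi> N n"
        unfolding annseq_def N'_def by auto
    qed
    then have "G = grann R p W' phi' N'"
      using G modu.grann_eq[OF modu_W fm N] modu.grann_eq[OF modu_W' W'_frob N'] by simp
    then show "G \<in> grann_set R p W' phi'" using N' unfolding grann_set_def by blast
  qed
next
  show "grann_set R p W' phi' \<subseteq> grann_set R p W \<phi>"
  proof
    fix G assume "G \<in> grann_set R p W' phi'"
    then obtain N' where N': "frob_submodule R W' phi' N'" and G: "G = grann R p W' phi' N'"
      unfolding grann_set_def by blast
    have N'c: "N' \<subseteq> carrier W'" using modu.fs_carrier[OF modu_W' N'] .
    have N'sub: "submodule N' R W'" using N' unfolding frob_submodule_def by blast
    define N where "N = {w \<in> carrier W. iota w \<in> N'}"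
    have N: "frob_submodule R W \<phi> N"
      unfolding frob_submodule_def
    proof
      show "submodule N R W"
      proof (rule submoduleI)
        show "N \<subseteq> carrier W" by (auto simp: N_def)
        show "\<zero>\<^bsub>W\<^esub> \<in> N" using iota_zero module.submoduleE(2,5)[OF W'_module N'sub] N'sub
          unfolding N_def submodule_def subgroup_def by auto
        fix x y assume x: "x \<in> N" and y: "y \<in> N"
        then show "x \<oplus>\<^bsub>W\<^esub> y \<in> N" using iota_add[of x y] module.submoduleE(5)[OF W'_module N'sub]
          by (auto simp: N_def)
      next
        fix a x assume a: "a \<in> carrier R" and x: "x \<in> N"
        then show "a \<odot>\<^bsub>W\<^esub> x \<in> N" using iota_smult[of a x] module.submoduleE(4)[OF W'_module N'sub]
          by (auto simp: N_def)
      next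
        fix x assume x: "x \<in> N"
        show "\<ominus>\<^bsub>W\<^esub> x \<in> N"
        proof -
          have xc: "x \<in> carrier W" using x by (auto simp: N_def)
          have "\<ominus>\<^bsub>W\<^esub> x = (\<ominus>\<^bsub>R\<^esub> \<one>\<^bsub>R\<^esub>) \<odot>\<^bsub>W\<^esub> x" using xc by (simp add: smult_l_minus)
          then show ?thesis using iota_smult[of "\<ominus>\<^bsub>R\<^esub> \<one>\<^bsub>R\<^esub>" x] module.submoduleE(4)[OF W'_module N'sub] xc x
            by (auto simp: N_def)
        qed
      qed
      show "\<phi> ` N \<subseteq> N"
        using N' phi'_iota phi_closed unfolding N_def frob_submodule_def by auto
    qed
    have fin: "\<forall>n. annseq R W' phi' N' n = annseq R W \<phi> N n"
    proof
      fix n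
      have i: "annseq R W' phi' N' k \<subseteq> annseq R W \<phi> N k" for k
      proof
        fix r assume r: "r \<in> annseq R W' phi' N' k"
        have "r \<odot>\<^bsub>W\<^esub> (\<phi> ^^ k) m = \<zero>\<^bsub>W\<^esub>" if m: "m \<in> N" for m
        proof -
          have mc: "m \<in> carrier W" "iota m \<in> N'" using m by (auto simp: N_def)
          have rc: "r \<in> carrier R" using r by (auto simp: annseq_def)
          have "r \<odot>\<^bsub>W'\<^esub> (phi' ^^ k) (iota m) = \<zero>\<^bsub>W'\<^esub>" using r mc by (auto simp: annseq_def)
          moreover have "r \<odot>\<^bsub>W'\<^esub> (phi' ^^ k) (iota m) = iota (r \<odot>\<^bsub>W\<^esub> (\<phi> ^^ k) m)"
            using mc rc by (simp add: phi'_pow_iota iota_smult phi_pow_carrier)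
          ultimately show ?thesis using iota_eq_zero by simp
        qed
        then show "r \<in> annseq R W \<phi> N k" using r by (auto simp: annseq_def)
      qed
      have ii: "annseq R W \<phi> N n \<subseteq> annseq R W' phi' N' (Suc n)"
      proof
        fix r assume r: "r \<in> annseq R W \<phi> N n"
        have rc: "r \<in> carrier R" using r by (auto simp: annseq_def)
        have "r \<odot>\<^bsub>W'\<^esub> (phi' ^^ Suc n) m' = \<zero>\<^bsub>W'\<^esub>" if m': "m' \<in> N'" for m'
        proof -
          have m'c: "m' \<in> carrier W'" using m' N'c by blast
          then obtain u w0 where uw: "m' = (cls u, w0)" "u \<in> U" "w0 \<in> carrier W" by (rule W'_E)
          define w where "w = u \<oplus>\<^bsub>W\<^esub> \<phi> w0"
          have wc: "w \<in> carrier W" using uw phi_closed by (simp add: w_def)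
          have pw: "phi' m' = iota w" using uw by (simp add: w_def iota_def)
          have "phi' m' \<in> N'" using N' m' unfolding frob_submodule_def by auto
          then have wN: "w \<in> N" using pw wc by (simp add: N_def)
          have "(phi' ^^ Suc n) m' = (phi' ^^ n) (iota w)"
            by (simp add: funpow_Suc_right pw del: funpow.simps)
          also have "\<dots> = iota ((\<phi> ^^ n) w)" using phi'_pow_iota wc by simp
          finally have "r \<odot>\<^bsub>W'\<^esub> (phi' ^^ Suc n) m' = iota (r \<odot>\<^bsub>W\<^esub> (\<phi> ^^ n) w)"
            using iota_smult[of r "(\<phi> ^^ n) w"] rc phi_pow_carrier wc by simp
          also have "\<dots> = \<zero>\<^bsub>W'\<^esub>" using r wN iota_zero by (auto simp: annseq_def)
          finally show ?thesis .
        qed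
        then show "r \<in> annseq R W' phi' N' (Suc n)" using rc by (auto simp: annseq_def)
      qed
      have iii: "annseq R W' phi' N' (Suc n) \<subseteq> annseq R W' phi' N' n"
        by (rule modu.ann_torsion[OF modu_W' W'_frob W'_tf[OF tf] N' p_pos])
      show "annseq R W' phi' N' n = annseq R W \<phi> N n" using i[of n] ii iii by blast
    qed
    then have "G = grann R p W \<phi> N"
      using G modu.grann_eq[OF modu_W fm N] modu.grann_eq[OF modu_W' W'_frob N'] by auto
    then show "G \<in> grann_set R p W \<phi>" using N unfolding grann_set_def by blast
  qed
qed

lemma grann_ideals_eq:
  assumes tf: "x_torsion_free W \<phi>"
  shows "grann_ideals R p W' phi' = grann_ideals R p W \<phi>"
proof -
  have k1: "(\<exists>N. frob_submodule R W' phi' N \<and> grann R p W' phi' N = X) \<longleftrightarrow> X \<in> grann_set R p W' phi'" for X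
    by (auto simp: grann_set_def)
  have k2: "(\<exists>N. frob_submodule R W \<phi> N \<and> grann R p W \<phi> N = X) \<longleftrightarrow> X \<in> grann_set R p W \<phi>" for X
    by (auto simp: grann_set_def)
  show ?thesis unfolding grann_ideals_def by (simp only: k1 k2 grann_set_eq[OF tf])
qed

end


context frobset begin

lemma psi_kernel: "{r \<in> V. psi r = \<zero>\<^bsub>W'\<^esub>} = frob_preimage R p t (relations R W t g)"
proof -
  have "psi r = \<zero>\<^bsub>W'\<^esub> \<longleftrightarrow> F r = \<zero>\<^bsub>W\<^esub>" if "r \<in> V" for r
    using that by (simp add: psi_def W'_zero)
  moreover have "(\<lambda>i. r i [^]\<^bsub>R\<^esub> p) \<in> V" if "r \<in> V" for r
    using that frob_zero by (simp add: V_iff)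
  ultimately show ?thesis
    unfolding frob_preimage_def relations_def F_def by auto
qed

end

theorem lemma2p8:
  fixes R :: "('a, 'c) ring_scheme" and p t :: nat and b :: int
    and W :: "('a, 'm) module" and \<phi> :: "'m \<Rightarrow> 'm" and D :: "int \<Rightarrow> 'm set"
    and g :: "nat \<Rightarrow> 'm"
  assumes "cring R" and "noetherian_ring R"
    and "nat_prime p" and "ring_char_eq R p"
    and "graded_frob_module R p W \<phi> D"
    and "\<forall>n < b. D n = {\<zero>\<^bsub>W\<^esub>}"
    and "\<forall>i < t. g i \<in> D b"
  shows "\<exists>(W' :: ('a, (nat \<Rightarrow> 'a) set \<times> 'm) module) \<phi>' D' \<iota> \<psi>.
      graded_frob_module R p W' \<phi>' D'
    \<and> (\<forall>n < b - 1. D' n = {\<zero>\<^bsub>W'\<^esub>})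
    \<and> frob_mono R W \<phi> W' \<phi>' \<iota>
    \<and> (\<forall>n \<ge> b. D' n = \<iota> ` D n)
    \<and> \<psi> ` vecs R t = D' (b - 1)
    \<and> (\<forall>r \<in> vecs R t. \<forall>s \<in> vecs R t. \<psi> (\<lambda>i. r i \<oplus>\<^bsub>R\<^esub> s i) = \<psi> r \<oplus>\<^bsub>W'\<^esub> \<psi> s)
    \<and> (\<forall>a \<in> carrier R. \<forall>r \<in> vecs R t. \<psi> (\<lambda>i. a \<otimes>\<^bsub>R\<^esub> r i) = a \<odot>\<^bsub>W'\<^esub> \<psi> r)
    \<and> {r \<in> vecs R t. \<psi> r = \<zero>\<^bsub>W'\<^esub>} = frob_preimage R p t (relations R W t g)
    \<and> (\<forall>r \<in> vecs R t. \<phi>' (\<psi> r) = \<iota> (\<Oplus>\<^bsub>W\<^esub> i \<in> {..<t}. (r i [^]\<^bsub>R\<^esub> p) \<odot>\<^bsub>W\<^esub> g i))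
    \<and> (x_torsion_free W \<phi> \<longrightarrow>
         x_torsion_free W' \<phi>'
         \<and> grann_set R p W' \<phi>' = grann_set R p W \<phi>
         \<and> grann_ideals R p W' \<phi>' = grann_ideals R p W \<phi>)"
proof -
  have "module R W" using assms(5) unfolding graded_frob_module_def frob_module_def by blast
  then interpret fs: frobset R W p t b \<phi> D g
    by (simp add: frobset_def frobset_axioms_def assms)
  show ?thesis
    apply (rule exI[of _ fs.W'], rule exI[of _ fs.phi'], rule exI[of _ fs.D'], rule exI[of _ fs.iota], rule exI[of _ fs.psi])
    using fs.W'_graded fs.D'_low fs.W'_mono fs.D'_high fs.psi_add fs.psi_smult fs.psi_kernel
      fs.phi'_psi fs.W'_tf fs.grann_set_eq fs.grann_ideals_eq
    by (simp add: fs.D'_def fs.F_def)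
qed


end
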